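(* Let $T$ be a complete discrete valuation ring with fraction field $K$ and uniformizer $t$. Let $\widehat R_0$ be a ring containing $T$ which is a complete discrete valuation ring with uniformizer $t$, with fraction field $F_0$; fix a real $\alpha>1$ and equip $F_0$ with the absolute value $|t^n u| = \alpha^{-n}$ ($n \in \mathbb Z$, $u \in \widehat R_0^\times$). Let $F_1, F_2$ be subfields of $F_0$ containing $T$, and let $V \subset F_1 \cap \widehat R_0$ and $W \subset F_2 \cap \widehat R_0$ be $t$-adically complete $T$-submodules such that (I) $V + W = \widehat R_0$ and (II) $V \cap t\widehat R_0 = tV$ and $W \cap t\widehat R_0 = tW$. Equip $V[1/t] \subset F_0$ with the induced metric. Then: (1) $V$ is closed in $\widehat R_0$; (2) for $v \in V[1/t]\setminus\{0\}$, $|v| = \inf\{\alpha^n : n \in \mathbb Z,\ t^n v \in V\}$; (3) $V = \{ v \in V[1/t] : |v| \le 1\}$, and $V$ is an open and closed submodule of $V[1/t]$; (4) $V[1/t]$ is closed in $F_0$ and is a Banach $K$-space.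
   Context: $t$-adically complete means that the natural map $V \to \varprojlim_m V/t^{m+1}V$ is an isomorphism. *)

theory Defs
  imports "HOL-Analysis.Analysis"
begin

text \<open>All rings/fields live inside one ambient field of type 'a (which will be F0).\<close>

definition subring_of :: "'a::field set \<Rightarrow> bool" where
  "subring_of S \<longleftrightarrow> 0 \<in> S \<and> 1 \<in> S \<and> (\<forall>x\<in>S. \<forall>y\<in>S. x + y \<in> S \<and> x - y \<in> S \<and> x * y \<in> S)"

definition subfield_of :: "'a::field set \<Rightarrow> bool" where
  "subfield_of S \<longleftrightarrow> subring_of S \<and> (\<forall>x\<in>S. inverse x \<in> S)"

definition unit_in :: "'a::field set \<Rightarrow> 'a \<Rightarrow> bool" where
  "unit_in S u \<longleftrightarrow> u \<in> S \<and> u \<noteq> 0 \<and> inverse u \<in> S"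

definition smul_set :: "'a::field \<Rightarrow> 'a set \<Rightarrow> 'a set" where
  "smul_set c V = (\<lambda>v. c * v) ` V"

definition dvr_with_uniformizer :: "'a::field set \<Rightarrow> 'a \<Rightarrow> bool" where
  "dvr_with_uniformizer S t \<longleftrightarrow> subring_of S \<and> t \<in> S \<and> t \<noteq> 0 \<and> \<not> unit_in S t \<and>
     (\<forall>x\<in>S. x \<noteq> 0 \<longrightarrow> (\<exists>n::nat. \<exists>u. unit_in S u \<and> x = t ^ n * u))"

definition submodule_over :: "'a::field set \<Rightarrow> 'a set \<Rightarrow> bool" where
  "submodule_over T V \<longleftrightarrow> 0 \<in> V \<and> (\<forall>x\<in>V. \<forall>y\<in>V. x + y \<in> V) \<and> (\<forall>a\<in>T. \<forall>x\<in>V. a * x \<in> V)"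

text \<open>t-adic completeness: the natural map V \<rightarrow> lim V/t^(m+1)V is bijective.\<close>
definition t_adically_complete :: "'a::field \<Rightarrow> 'a set \<Rightarrow> bool" where
  "t_adically_complete t V \<longleftrightarrow>
     (\<forall>v\<in>V. (\<forall>m::nat. v \<in> smul_set (t ^ (m + 1)) V) \<longrightarrow> v = 0) \<and>
     (\<forall>x::nat \<Rightarrow> 'a. (\<forall>m. x m \<in> V \<and> x (Suc m) - x m \<in> smul_set (t ^ (m + 1)) V) \<longrightarrow>
        (\<exists>v\<in>V. \<forall>m. v - x m \<in> smul_set (t ^ (m + 1)) V))"

definition complete_dvr :: "'a::field set \<Rightarrow> 'a \<Rightarrow> bool" where
  "complete_dvr S t \<longleftrightarrow> dvr_with_uniformizer S t \<and> t_adically_complete t S"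

definition frac_field :: "'a::field set \<Rightarrow> 'a set" where
  "frac_field S = {a / b | a b. a \<in> S \<and> b \<in> S \<and> b \<noteq> 0}"

definition tval :: "'a::field set \<Rightarrow> 'a \<Rightarrow> 'a \<Rightarrow> int" where
  "tval R t x = (THE n::int. \<exists>u. unit_in R u \<and> x = t powi n * u)"

definition tabs :: "real \<Rightarrow> 'a::field set \<Rightarrow> 'a \<Rightarrow> 'a \<Rightarrow> real" where
  "tabs \<alpha> R t x = (if x = 0 then 0 else \<alpha> powi (- tval R t x))"

definition tdist :: "real \<Rightarrow> 'a::field set \<Rightarrow> 'a \<Rightarrow> 'a \<Rightarrow> 'a \<Rightarrow> real" where
  "tdist \<alpha> R t x y = tabs \<alpha> R t (x - y)"

definition invert_t :: "'a::field \<Rightarrow> 'a set \<Rightarrow> 'a set" where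
  "invert_t t V = {v / t ^ n | v n. v \<in> V}"

definition banach_space_over :: "'a::field set \<Rightarrow> ('a \<Rightarrow> real) \<Rightarrow> 'a set \<Rightarrow> bool" where
  "banach_space_over K N X \<longleftrightarrow>
     0 \<in> X \<and> (\<forall>x\<in>X. \<forall>y\<in>X. x + y \<in> X) \<and> (\<forall>k\<in>K. \<forall>x\<in>X. k * x \<in> X) \<and>
     (\<forall>x\<in>X. N x \<ge> 0 \<and> (N x = 0 \<longleftrightarrow> x = 0)) \<and>
     (\<forall>x\<in>X. \<forall>y\<in>X. N (x + y) \<le> N x + N y) \<and>
     (\<forall>k\<in>K. \<forall>x\<in>X. N (k * x) = N k * N x) \<and>
     Metric_space.mcomplete X (\<lambda>x y. N (x - y))"

end

theory Submission imports Defs begin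

locale vs =
  fixes R :: "'a::field set" and t :: 'a and al :: real
  assumes dvr: "dvr_with_uniformizer R t" and frac: "frac_field R = UNIV" and al: "al > 1"
begin

lemma sr: "subring_of R" and tR: "t \<in> R" and t0: "t \<noteq> 0" and tnu: "\<not> unit_in R t"
  and dec: "\<And>x. x \<in> R \<Longrightarrow> x \<noteq> 0 \<Longrightarrow> \<exists>n::nat. \<exists>u. unit_in R u \<and> x = t ^ n * u"
  using dvr unfolding dvr_with_uniformizer_def by auto

lemma R0: "0 \<in> R" and R1: "1 \<in> R" and Radd: "x \<in> R \<Longrightarrow> y \<in> R \<Longrightarrow> x + y \<in> R"
  and Rdiff: "x \<in> R \<Longrightarrow> y \<in> R \<Longrightarrow> x - y \<in> R" and Rmult: "x \<in> R \<Longrightarrow> y \<in> R \<Longrightarrow> x * y \<in> R"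
  using sr unfolding subring_of_def by auto

lemma Rneg: "x \<in> R \<Longrightarrow> - x \<in> R"
  using Rdiff[OF R0, of x] by simp

lemma Rpow: "x \<in> R \<Longrightarrow> x ^ n \<in> R"
  by (induction n) (auto intro: Rmult R1)

lemma unit_mult: "unit_in R u \<Longrightarrow> unit_in R v \<Longrightarrow> unit_in R (u * v)"
  unfolding unit_in_def by (auto intro: Rmult simp: inverse_mult_distrib)

lemma unit_inv: "unit_in R u \<Longrightarrow> unit_in R (inverse u)"
  unfolding unit_in_def by auto

lemma unit_one: "unit_in R 1"
  unfolding unit_in_def using R1 by auto

lemma unit_neg: "unit_in R u \<Longrightarrow> unit_in R (- u)"
  unfolding unit_in_def by (auto intro: Rneg simp: inverse_minus_eq)

lemma tpow_not_unit: "k > 0 \<Longrightarrow> \<not> unit_in R (t ^ k)"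
proof
  assume k: "k > 0" and u: "unit_in R (t ^ k)"
  then obtain j where j: "k = Suc j" by (cases k) auto
  have "inverse t = t ^ j * inverse (t ^ k)"
    using t0 j by (simp add: field_simps)
  also have "\<dots> \<in> R" using u Rpow[OF tR] Rmult unfolding unit_in_def by auto
  finally show False using tnu tR t0 unfolding unit_in_def by auto
qed

lemma dec_ex: "x \<noteq> 0 \<Longrightarrow> \<exists>n u. unit_in R u \<and> x = t powi n * u"
proof -
  assume x: "x \<noteq> 0"
  have "x \<in> frac_field R" using frac by auto
  then obtain a b where ab: "a \<in> R" "b \<in> R" "b \<noteq> 0" "x = a / b" unfolding frac_field_def by auto
  then have a0: "a \<noteq> 0" using x by auto
  obtain i u where iu: "unit_in R u" "a = t ^ i * u" using dec ab a0 by blast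
  obtain j v where jv: "unit_in R v" "b = t ^ j * v" using dec ab by blast
  have "x = t powi (int i - int j) * (u * inverse v)"
    using ab iu jv t0 by (simp add: power_int_diff field_simps unit_in_def)
  then show ?thesis using unit_mult[OF iu(1) unit_inv[OF jv(1)]] by blast
qed

lemma dec_uniq_aux: "unit_in R u \<Longrightarrow> unit_in R v \<Longrightarrow> t powi n * u = t powi m * v \<Longrightarrow> n \<le> m"
proof (rule ccontr)
  assume u: "unit_in R u" and v: "unit_in R v" and e: "t powi n * u = t powi m * v" and nm: "\<not> n \<le> m"
  have "t powi n = t powi m * t powi (n - m)" using t0 by (simp flip: power_int_add)
  then have "t powi (n - m) = v * inverse u" using e t0 u unfolding unit_in_def
    by (simp add: field_simps)
  moreover have "t powi (n - m) = t ^ nat (n - m)" using nm by (simp add: power_int_nonneg_exp)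
  ultimately have "unit_in R (t ^ nat (n - m))" using unit_mult[OF v unit_inv[OF u]] by simp
  then show False using tpow_not_unit[of "nat (n - m)"] nm by auto
qed

lemma dec_uniq: "unit_in R u \<Longrightarrow> unit_in R v \<Longrightarrow> t powi n * u = t powi m * v \<Longrightarrow> n = m"
  using dec_uniq_aux[of u v n m] dec_uniq_aux[of v u m n] by auto

lemma tval_eq: "unit_in R u \<Longrightarrow> tval R t (t powi n * u) = n"
  unfolding tval_def
  by (rule the_equality) (auto dest: dec_uniq)

lemma tval_dec: "x \<noteq> 0 \<Longrightarrow> \<exists>u. unit_in R u \<and> x = t powi (tval R t x) * u"
  using dec_ex tval_eq by metis

lemma tval_mult: "x \<noteq> 0 \<Longrightarrow> y \<noteq> 0 \<Longrightarrow> tval R t (x * y) = tval R t x + tval R t y"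
proof -
  assume x: "x \<noteq> 0" and y: "y \<noteq> 0"
  obtain a u where u: "unit_in R u" "x = t powi a * u" using dec_ex[OF x] by blast
  obtain b v where v: "unit_in R v" "y = t powi b * v" using dec_ex[OF y] by blast
  have "x * y = t powi (a + b) * (u * v)"
    using t0 by (simp add: u(2) v(2) power_int_add mult_ac)
  then show ?thesis using tval_eq[OF unit_mult[OF u(1) v(1)]] tval_eq[OF u(1)] tval_eq[OF v(1)] u(2) v(2) by metis
qed

lemma tval_tpowi: "tval R t (t powi n) = n"
  using tval_eq[OF unit_one, of n] by simp

lemma tval_unit: "unit_in R u \<Longrightarrow> tval R t u = 0"
  using tval_eq[of u 0] by simp

lemma tval_neg: "tval R t (- x) = tval R t x"
proof (cases "x = 0")
  case False
  have "-x = (-1) * x" by simp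
  then show ?thesis using tval_mult[of "-1" x] False tval_unit[OF unit_neg[OF unit_one]] by simp
qed simp

lemma tval_inverse: "x \<noteq> 0 \<Longrightarrow> tval R t (inverse x) = - tval R t x"
  using tval_mult[of x "inverse x"] tval_unit[OF unit_one] by simp

lemma memR: "x \<in> R \<longleftrightarrow> x = 0 \<or> 0 \<le> tval R t x"
proof
  assume x: "x \<in> R"
  show "x = 0 \<or> 0 \<le> tval R t x"
  proof (cases "x = 0")
    case False
    then obtain n u where "unit_in R u" "x = t ^ n * u" using dec x by blast
    then have "tval R t x = int n" using tval_eq[of u "int n"] by simp
    then show ?thesis by simp
  qed simp
next
  assume h: "x = 0 \<or> 0 \<le> tval R t x"
  show "x \<in> R"
  proof (cases "x = 0")
    case True then show ?thesis using R0 by simp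
  next
    case False
    then obtain u where u: "unit_in R u" "x = t powi (tval R t x) * u" using tval_dec by blast
    have "t powi (tval R t x) = t ^ nat (tval R t x)" using h False by (simp add: power_int_nonneg_exp)
    then show ?thesis using u Rmult Rpow[OF tR] unfolding unit_in_def by metis
  qed
qed

lemma tval_add: "x \<noteq> 0 \<Longrightarrow> y \<noteq> 0 \<Longrightarrow> x + y \<noteq> 0 \<Longrightarrow> min (tval R t x) (tval R t y) \<le> tval R t (x + y)"
proof -
  have main: "tval R t x \<le> tval R t (x + y)" if x: "x \<noteq> 0" and y: "y \<noteq> 0" and s: "x + y \<noteq> 0"
    and le: "tval R t x \<le> tval R t y" for x y
  proof -
    have "tval R t (y / x) = tval R t y - tval R t x"
      using tval_mult[of y "inverse x"] tval_inverse[OF x] x y by (simp add: divide_inverse)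
    then have "y / x \<in> R" using le memR by auto
    then have "1 + y / x \<in> R" using Radd R1 by auto
    moreover have "1 + y / x \<noteq> 0" using s x by (simp add: field_simps)
    ultimately have "0 \<le> tval R t (1 + y / x)" using memR by auto
    moreover have "x + y = x * (1 + y / x)" using x by (simp add: field_simps)
    ultimately show ?thesis using tval_mult[of x "1 + y / x"] x \<open>1 + y / x \<noteq> 0\<close> by simp
  qed
  assume "x \<noteq> 0" "y \<noteq> 0" "x + y \<noteq> 0"
  then show ?thesis using main[of x y] main[of y x] by (cases "tval R t x \<le> tval R t y") (auto simp: add.commute)
qed

lemma al_mono: "al powi a \<le> al powi b \<longleftrightarrow> a \<le> b"
  using power_int_increasing[of a b al] power_int_strict_increasing[of b a al] al by force

lemma al_smono: "al powi a < al powi b \<longleftrightarrow> a < b"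
  using power_int_increasing[of b a al] power_int_strict_increasing[of a b al] al by force

lemma al_pos: "al powi a > 0" using al by simp

definition "ab x = tabs al R t x"

lemma ab_def2: "ab x = (if x = 0 then 0 else al powi (- tval R t x))"
  unfolding ab_def tabs_def by simp

lemma ab_nonneg: "ab x \<ge> 0" using al_pos unfolding ab_def2 by (simp add: less_imp_le)

lemma ab_zero: "ab x = 0 \<longleftrightarrow> x = 0" using al_pos[of "- tval R t x"] al unfolding ab_def2 by (auto simp: less_imp_neq[symmetric])

lemma ab_neg: "ab (- x) = ab x" unfolding ab_def2 by (simp add: tval_neg)

lemma ab_mult: "ab (x * y) = ab x * ab y"
proof -
  have "al powi (- a + - b) = al powi (- a) * al powi (- b)" for a b
    by (rule power_int_add) (use al in auto)
  then show ?thesis unfolding ab_def2 by (auto simp: tval_mult)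
qed

lemma ab_tpowi: "ab (t powi n * x) = al powi (- n) * ab x"
  using ab_mult[of "t powi n" x] t0 unfolding ab_def2 by (simp add: tval_tpowi)

lemma ab_le: "x \<noteq> 0 \<Longrightarrow> ab x \<le> al powi (- m) \<longleftrightarrow> m \<le> tval R t x"
  unfolding ab_def2 by (simp add: al_mono)

lemma ab_less: "x \<noteq> 0 \<Longrightarrow> ab x < al powi (- m) \<longleftrightarrow> m < tval R t x"
  unfolding ab_def2 by (simp add: al_smono)

lemma ab_le1: "ab x \<le> 1 \<longleftrightarrow> x \<in> R"
  using ab_le[of x 0] memR by (cases "x = 0") (auto simp: ab_def2)

lemma ab_ultra: "ab (x + y) \<le> max (ab x) (ab y)"
proof (cases "x = 0 \<or> y = 0 \<or> x + y = 0")
  case True then show ?thesis using ab_nonneg[of x] ab_nonneg[of y] by (auto simp: ab_def2)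
next
  case False
  then have "min (tval R t x) (tval R t y) \<le> tval R t (x + y)" using tval_add by auto
  then have "tval R t x \<le> tval R t (x + y) \<or> tval R t y \<le> tval R t (x + y)" by linarith
  then have "al powi - tval R t (x + y) \<le> al powi - tval R t x \<or> al powi - tval R t (x + y) \<le> al powi - tval R t y"
    by (auto simp: al_mono)
  then show ?thesis using False unfolding ab_def2 by auto
qed

lemma ab_tri: "ab (x + y) \<le> ab x + ab y"
  using ab_ultra[of x y] ab_nonneg[of x] ab_nonneg[of y] by linarith

lemma metric: "Metric_space S (tdist al R t)"
proof
  fix x y z
  show "0 \<le> tdist al R t x y" using ab_nonneg unfolding tdist_def ab_def by auto
  show "tdist al R t x y = tdist al R t y x" using ab_neg[of "x - y"] unfolding tdist_def ab_def by simp
  show "tdist al R t x y = 0 \<longleftrightarrow> x = y" using ab_zero[of "x - y"] unfolding tdist_def ab_def by simp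
  show "tdist al R t x z \<le> tdist al R t x y + tdist al R t y z"
    using ab_tri[of "x - y" "y - z"] unfolding tdist_def ab_def by simp
qed

lemma smul_pow: "x \<in> smul_set (t ^ m) R \<longleftrightarrow> x = 0 \<or> int m \<le> tval R t x"
proof
  assume "x \<in> smul_set (t ^ m) R"
  then obtain r where r: "r \<in> R" "x = t ^ m * r" unfolding smul_set_def by auto
  show "x = 0 \<or> int m \<le> tval R t x"
  proof (cases "r = 0")
    case False
    then have "tval R t x = int m + tval R t r" using r t0 tval_mult[of "t ^ m" r] tval_tpowi[of "int m"] by simp
    then show ?thesis using memR r False by auto
  qed (use r in simp)
next
  assume h: "x = 0 \<or> int m \<le> tval R t x"
  have "x / t ^ m \<in> R"
  proof (cases "x = 0")
    case True then show ?thesis using R0 by simp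
  next
    case False
    have "tval R t (x / t ^ m) = tval R t x - int m"
      using tval_mult[of x "inverse (t ^ m)"] tval_inverse[of "t ^ m"] tval_tpowi[of "int m"] t0 False
      by (simp add: divide_inverse)
    then show ?thesis using memR h False by auto
  qed
  moreover have "x = t ^ m * (x / t ^ m)" using t0 by simp
  ultimately show "x \<in> smul_set (t ^ m) R" unfolding smul_set_def by blast
qed

lemma small_ex: "e > 0 \<Longrightarrow> \<exists>k::nat. al powi (- int k) < e"
proof -
  assume e: "e > 0"
  obtain k where k: "1 / e < al ^ k" using real_arch_pow[OF al] by blast
  have "al powi (- int k) = inverse (al ^ k)" by (simp add: power_int_minus)
  also have "\<dots> < e" using k e al by (simp add: field_simps)
  finally show ?thesis by blast
qed

lemma small_iff: "ab z < al powi (- int k) \<longleftrightarrow> z \<in> smul_set (t ^ Suc k) R"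
  using ab_less[of z "int k"] smul_pow[of z "Suc k"] al_pos[of "- int k"] by (cases "z = 0") (auto simp: ab_def2)

lemma small_diff: "ab x < e \<Longrightarrow> ab y < e \<Longrightarrow> ab (x - y) < e"
  using ab_ultra[of x "- y"] ab_neg[of y] by simp

lemma smul_tR: "x \<in> smul_set t R \<longleftrightarrow> x = 0 \<or> 1 \<le> tval R t x"
  using smul_pow[of x 1] by simp

end

locale vm = vs +
  fixes T V :: "'a set"
  assumes Tdvr: "dvr_with_uniformizer T t"
    and Vmod: "submodule_over T V" and Vsub: "V \<subseteq> R"
    and Vc: "t_adically_complete t V" and II: "V \<inter> smul_set t R = smul_set t V"
begin

lemma Tsr: "subring_of T" and tT: "t \<in> T" using Tdvr unfolding dvr_with_uniformizer_def by auto

lemma V0: "0 \<in> V" and Vadd: "x \<in> V \<Longrightarrow> y \<in> V \<Longrightarrow> x + y \<in> V" and Vsm: "a \<in> T \<Longrightarrow> x \<in> V \<Longrightarrow> a * x \<in> V"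
  using Vmod unfolding submodule_over_def by auto

lemma Tm1: "- 1 \<in> T" using Tsr unfolding subring_of_def by (metis diff_0)

lemma Vneg: "x \<in> V \<Longrightarrow> - x \<in> V" using Vsm[OF Tm1] by force

lemma Vdiff: "x \<in> V \<Longrightarrow> y \<in> V \<Longrightarrow> x - y \<in> V" using Vadd Vneg by force

lemma Vtpow: "x \<in> V \<Longrightarrow> t ^ n * x \<in> V"
proof (induction n)
  case (Suc n)
  have "t ^ Suc n * x = t * (t ^ n * x)" by (simp add: mult.assoc)
  then show ?case using Vsm[OF tT Suc.IH] Suc.prems by (simp only:)
qed simp

lemma VII': "x \<in> V \<Longrightarrow> x = 0 \<or> int m \<le> tval R t x \<Longrightarrow> x / t ^ m \<in> V"
proof (induction m arbitrary: x)
  case 0 then show ?case by simp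
next
  case (Suc m)
  show ?case
  proof (cases "x = 0")
    case True then show ?thesis using V0 by simp
  next
    case False
    then have "x \<in> smul_set t R" using Suc.prems smul_tR by auto
    then have "x \<in> smul_set t V" using II Suc.prems by auto
    then obtain v where v: "v \<in> V" "x = t * v" unfolding smul_set_def by auto
    then have v0: "v \<noteq> 0" using False by auto
    have "tval R t x = 1 + tval R t v" using v v0 t0 tval_mult[of t v] tval_tpowi[of 1] by simp
    then have "int m \<le> tval R t v" using Suc.prems(2) False by simp
    then have "v / t ^ m \<in> V" using Suc.IH[OF v(1)] by blast
    moreover have "x / t ^ Suc m = v / t ^ m" using v t0 by simp
    ultimately show ?thesis by simp
  qed
qed

lemma VII: "V \<inter> smul_set (t ^ m) R = smul_set (t ^ m) V"
proof
  show "V \<inter> smul_set (t ^ m) R \<subseteq> smul_set (t ^ m) V"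
  proof
    fix x assume x: "x \<in> V \<inter> smul_set (t ^ m) R"
    then have "x / t ^ m \<in> V" using VII' smul_pow by auto
    moreover have "x = t ^ m * (x / t ^ m)" using t0 by simp
    ultimately show "x \<in> smul_set (t ^ m) V" unfolding smul_set_def by blast
  qed
  show "smul_set (t ^ m) V \<subseteq> V \<inter> smul_set (t ^ m) R"
    using Vtpow Vsub unfolding smul_set_def by auto
qed

lemma Vlim:
  assumes f: "\<And>k. f k \<in> V" "\<And>k. ab (f (Suc k) - f k) < al powi (- int k)"
  shows "\<exists>v\<in>V. \<forall>k. ab (v - f k) < al powi (- int k)"
proof -
  have "f (Suc m) - f m \<in> V \<inter> smul_set (t ^ Suc m) R" for m
    using f Vdiff small_iff by blast
  then have A: "f (Suc m) - f m \<in> smul_set (t ^ Suc m) V" for m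
    using VII[of "Suc m"] by blast
  have "\<forall>m. f m \<in> V \<and> f (Suc m) - f m \<in> smul_set (t ^ (m + 1)) V"
    using f A by simp
  then obtain v where v: "v \<in> V" "\<forall>m. v - f m \<in> smul_set (t ^ (m + 1)) V"
    using Vc unfolding t_adically_complete_def by blast
  have "ab (v - f k) < al powi (- int k)" for k
    using v(2) Vsub unfolding small_iff smul_set_def by auto
  then show ?thesis using v by blast
qed

lemma V_closed_R: "closedin (Metric_space.mtopology R (tdist al R t)) V"
proof -
  interpret M: Metric_space R "tdist al R t" by (rule metric)
  show ?thesis unfolding M.closedin_metric
  proof (intro conjI allI impI)
    show "V \<subseteq> R" by (rule Vsub)
    fix x assume x: "x \<in> R - V"
    show "\<exists>r>0. disjnt V (M.mball x r)"
    proof (rule ccontr)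
      assume neg: "\<not> ?thesis"
      have "\<forall>k::nat. \<exists>y. y \<in> V \<and> ab (x - y) < al powi (- int k)"
      proof
        fix k :: nat
        have "\<not> disjnt V (M.mball x (al powi (- int k)))" using neg al_pos by blast
        then obtain y where "y \<in> V" "y \<in> M.mball x (al powi (- int k))" unfolding disjnt_def by blast
        then show "\<exists>y. y \<in> V \<and> ab (x - y) < al powi (- int k)" unfolding M.in_mball tdist_def ab_def by auto
      qed
      then obtain f where f: "\<And>k. f k \<in> V" "\<And>k. ab (x - f k) < al powi (- int k)" by metis
      have "ab (f (Suc k) - f k) < al powi (- int k)" for k
      proof -
        have "ab (x - f (Suc k)) < al powi (- int k)"
          using f(2)[of "Suc k"] al_smono[of "- int (Suc k)" "- int k"] by simp
        then show ?thesis using small_diff[OF f(2)[of k], of "x - f (Suc k)"] by simp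
      qed
      then obtain v where v: "v \<in> V" "\<And>k. ab (v - f k) < al powi (- int k)" using Vlim f by blast
      have vk: "ab (x - v) < al powi (- int k)" for k
        using small_diff[OF f(2)[of k] v(2)[of k]] by simp
      have "x = v"
      proof (rule ccontr)
        assume "x \<noteq> v"
        then have "x - v \<noteq> 0" by simp
        then have "int k < tval R t (x - v)" for k using vk ab_less by blast
        from this[of "nat (tval R t (x - v))"] show False by (simp split: if_splits)
      qed
      then show False using x v by simp
    qed
  qed
qed

definition "X = invert_t t V"

lemma X_iff: "x \<in> X \<longleftrightarrow> (\<exists>v n. v \<in> V \<and> x = v / t ^ n)"
  unfolding X_def invert_t_def by auto

lemma VX: "x \<in> V \<Longrightarrow> x \<in> X" using X_iff[of x] by (metis div_by_1 power_0)

lemma X_diff: "x \<in> X \<Longrightarrow> y \<in> X \<Longrightarrow> x - y \<in> X"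
proof -
  assume "x \<in> X" "y \<in> X"
  then obtain v n w m where vw: "v \<in> V" "w \<in> V" "x = v / t ^ n" "y = w / t ^ m" using X_iff by auto
  have "x = t ^ m * v / t ^ (n + m)" using vw t0 by (simp add: power_add)
  moreover have "y = t ^ n * w / t ^ (n + m)" using vw t0 by (simp add: power_add)
  ultimately have "x - y = (t ^ m * v - t ^ n * w) / t ^ (n + m)" by (simp add: diff_divide_distrib)
  moreover have "t ^ m * v - t ^ n * w \<in> V" using vw Vdiff Vtpow by auto
  ultimately show ?thesis using X_iff by blast
qed

lemma X0: "0 \<in> X" using VX V0 by simp

lemma X_add: "x \<in> X \<Longrightarrow> y \<in> X \<Longrightarrow> x + y \<in> X"
  using X_diff[of 0 y] X_diff[of x "- y"] X0 by simp

lemma X_tpowi: "x \<in> X \<Longrightarrow> t powi k * x \<in> X"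
proof -
  assume "x \<in> X"
  then obtain v n where v: "v \<in> V" "x = v / t ^ n" using X_iff by auto
  show ?thesis
  proof (cases "k \<ge> 0")
    case True
    then have "t powi k * x = (t ^ nat k * v) / t ^ n" using v by (simp add: power_int_nonneg_exp)
    then show ?thesis using Vtpow[OF v(1)] X_iff by blast
  next
    case False
    then have "t powi k = inverse (t ^ nat (- k))"
      using power_int_minus[of t "- k"] by (simp add: power_int_nonneg_exp)
    then have "t powi k * x = v / t ^ (n + nat (- k))" using v t0 by (simp add: field_simps power_add)
    then show ?thesis using v X_iff by blast
  qed
qed

lemma tval_div_tpow: "x \<noteq> 0 \<Longrightarrow> tval R t (x / t ^ k) = tval R t x - int k"
  using tval_mult[of x "inverse (t ^ k)"] tval_inverse[of "t ^ k"] tval_tpowi[of "int k"] t0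
  by (simp add: divide_inverse)

lemma X_val0: "x \<in> X \<Longrightarrow> x \<noteq> 0 \<Longrightarrow> tval R t x = 0 \<Longrightarrow> x \<in> V"
proof -
  assume xX: "x \<in> X" and x0: "x \<noteq> 0" and tx: "tval R t x = 0"
  obtain v n where v: "v \<in> V" "x = v / t ^ n" using X_iff xX by auto
  then have v0: "v \<noteq> 0" using x0 by auto
  have "tval R t v = int n" using tval_div_tpow[OF v0, of n] v tx by simp
  then show ?thesis using VII'[OF v(1), of n] v by simp
qed

lemma X_le1: "x \<in> X \<Longrightarrow> ab x \<le> 1 \<Longrightarrow> x \<in> V"
proof -
  assume xX: "x \<in> X" and x1: "ab x \<le> 1"
  show "x \<in> V"
  proof (cases "x = 0")
    case True then show ?thesis using V0 by simp
  next
    case False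
    define k where "k = nat (tval R t x)"
    have tx: "0 \<le> tval R t x" using x1 memR ab_le1 False by auto
    obtain v n where v: "v \<in> V" "x = v / t ^ n" using X_iff xX by auto
    have "x / t ^ k = v / t ^ (n + k)" using v t0 by (simp add: power_add)
    then have yX: "x / t ^ k \<in> X" using v X_iff by blast
    have "tval R t (x / t ^ k) = 0" using tval_div_tpow[OF False, of k] tx k_def by simp
    then have "x / t ^ k \<in> V" using X_val0[OF yX] False t0 by simp
    moreover have "x = t ^ k * (x / t ^ k)" using t0 by simp
    ultimately show ?thesis using Vtpow by metis
  qed
qed


lemma V_eq: "V = {v \<in> X. ab v \<le> 1}"
  using VX X_le1 Vsub ab_le1 by blast

lemma pow_cancel: "al powi n * al powi (- n) = 1"
  using al by (simp add: power_int_minus)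

lemma norm_inf: "x \<in> X - {0} \<Longrightarrow> ab x = Inf ((\<lambda>n. al powi n) ` {n::int. t powi n * x \<in> V})"
proof -
  assume x: "x \<in> X - {0}"
  then have x0: "x \<noteq> 0" and xX: "x \<in> X" by auto
  have abx: "ab x = al powi (- tval R t x)" using x0 by (simp add: ab_def2)
  have "ab (t powi (- tval R t x) * x) = al powi (tval R t x) * ab x"
    using ab_tpowi[of "- tval R t x" x] by simp
  then have "ab (t powi (- tval R t x) * x) = 1" using pow_cancel abx by simp
  then have mem: "t powi (- tval R t x) * x \<in> V" using X_le1 X_tpowi[OF xX] by simp
  show ?thesis
  proof (rule cInf_eq_minimum[symmetric])
    show "ab x \<in> (\<lambda>n. al powi n) ` {n. t powi n * x \<in> V}" using mem abx by blast
    fix y assume "y \<in> (\<lambda>n. al powi n) ` {n. t powi n * x \<in> V}"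
    then obtain n where n: "y = al powi n" "t powi n * x \<in> V" by auto
    then have "ab (t powi n * x) \<le> 1" using ab_le1 Vsub by blast
    then have "al powi (- n) * ab x \<le> 1" using ab_tpowi by simp
    then have "al powi n * (al powi (- n) * ab x) \<le> al powi n * 1"
      using al_pos[of n] by (intro mult_left_mono) auto
    then show "ab x \<le> y" using n pow_cancel[of n] by (simp add: mult.assoc[symmetric])
  qed
qed

lemma V_open_X: "openin (Metric_space.mtopology X (tdist al R t)) V"
proof -
  interpret M: Metric_space X "tdist al R t" by (rule metric)
  show ?thesis unfolding M.openin_mtopology
  proof (intro conjI allI impI)
    show "V \<subseteq> X" using VX by blast
    fix x assume x: "x \<in> V"
    have "M.mball x 1 \<subseteq> V"
    proof
      fix y assume "y \<in> M.mball x 1"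
      then have y: "y \<in> X" "ab (x - y) < 1" unfolding M.in_mball tdist_def ab_def by auto
      then have "x - y \<in> V" using X_le1 X_diff VX x by simp
      then have "x - (x - y) \<in> V" using Vdiff x by blast
      then show "y \<in> V" by simp
    qed
    then show "\<exists>r>0. M.mball x r \<subseteq> V" by (intro exI[of _ 1]) auto
  qed
qed

lemma V_closed_X: "closedin (Metric_space.mtopology X (tdist al R t)) V"
proof -
  interpret M: Metric_space X "tdist al R t" by (rule metric)
  show ?thesis unfolding M.closedin_metric
  proof (intro conjI allI impI)
    show "V \<subseteq> X" using VX by blast
    fix x assume x: "x \<in> X - V"
    have "disjnt V (M.mball x 1)"
      unfolding disjnt_def
    proof (rule equals0I)
      fix y assume "y \<in> V \<inter> M.mball x 1"
      then have "y \<in> V" "y \<in> M.mball x 1" by auto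
      then have y: "y \<in> V" "ab (x - y) < 1" unfolding M.in_mball tdist_def ab_def by auto
      then have "x - y \<in> V" using X_le1 X_diff VX x by simp
      then have "(x - y) + y \<in> V" using Vadd y by blast
      then show False using x by simp
    qed
    then show "\<exists>r>0. disjnt V (M.mball x r)" by (intro exI[of _ 1]) auto
  qed
qed

lemma X_closed: "closedin (Metric_space.mtopology UNIV (tdist al R t)) X"
proof -
  interpret M: Metric_space UNIV "tdist al R t" by (rule metric)
  interpret MR: Metric_space R "tdist al R t" by (rule metric)
  show ?thesis unfolding M.closedin_metric
  proof (intro conjI allI impI)
    show "X \<subseteq> UNIV" by simp
    fix x assume x: "x \<in> UNIV - X"
    then have x0: "x \<noteq> 0" using X0 by auto
    define n where "n = nat (- tval R t x)"
    define z where "z = t ^ n * x"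
    have "tval R t z = int n + tval R t x" unfolding z_def
      using tval_mult[of "t ^ n" x] x0 t0 tval_tpowi[of "int n"] by simp
    then have zR: "z \<in> R" using memR n_def by auto
    have zV: "z \<notin> V"
    proof
      assume "z \<in> V"
      then have "z / t ^ n \<in> X" using X_iff by blast
      then show False using x t0 unfolding z_def by simp
    qed
    obtain r where r: "r > 0" "disjnt V (MR.mball z r)"
      using V_closed_R zR zV unfolding MR.closedin_metric by blast
    define r' where "r' = min r 1 * al powi (int n)"
    have r'0: "r' > 0" unfolding r'_def using r al_pos[of "int n"] by (intro mult_pos_pos) auto
    have "disjnt X (M.mball x r')"
      unfolding disjnt_def
    proof (rule equals0I)
      fix y assume "y \<in> X \<inter> M.mball x r'"
      then have "y \<in> X" "y \<in> M.mball x r'" by auto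
      then have y: "y \<in> X" "ab (x - y) < r'" unfolding M.in_mball tdist_def ab_def by auto
      have "ab (z - t ^ n * y) = al powi (- int n) * ab (x - y)"
        using ab_tpowi[of "int n" "x - y"] unfolding z_def by (simp add: right_diff_distrib)
      also have "\<dots> < al powi (- int n) * r'" using y(2) al_pos by simp
      also have "\<dots> = min r 1" unfolding r'_def using pow_cancel[of "int n"] by (simp add: mult_ac)
      finally have d: "ab (z - t ^ n * y) < min r 1" .
      then have "ab (z - t ^ n * y) \<le> 1" by simp
      then have "z - t ^ n * y \<in> R" using ab_le1 by blast
      then have "z - (z - t ^ n * y) \<in> R" using Rdiff zR by blast
      then have tyR: "t ^ n * y \<in> R" by simp
      have "t ^ n * y \<in> X" using X_tpowi[OF y(1), of "int n"] by simp
      then have "t ^ n * y \<in> V" using X_le1 tyR ab_le1 by simp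
      moreover have "t ^ n * y \<in> MR.mball z r" using d zR tyR unfolding MR.in_mball tdist_def ab_def by simp
      ultimately show False using r(2) unfolding disjnt_def by blast
    qed
    then show "\<exists>r>0. disjnt X (M.mball x r)" using r'0 by blast
  qed
qed

lemma X_scal: "k \<in> frac_field T \<Longrightarrow> x \<in> X \<Longrightarrow> k * x \<in> X"
proof -
  assume k: "k \<in> frac_field T" and x: "x \<in> X"
  obtain a b where ab: "a \<in> T" "b \<in> T" "b \<noteq> 0" "k = a / b" using k unfolding frac_field_def by auto
  obtain n u where u: "unit_in T u" "b = t ^ n * u"
    using ab Tdvr unfolding dvr_with_uniformizer_def by blast
  obtain v m where v: "v \<in> V" "x = v / t ^ m" using x X_iff by auto
  have u0: "u \<noteq> 0" using u unfolding unit_in_def by auto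
  have "a * inverse u \<in> T" using u ab Tsr unfolding unit_in_def subring_of_def by auto
  then have w: "a * inverse u * v \<in> V" using Vsm v by blast
  have "k * x = a * inverse u * v / t ^ (n + m)"
    unfolding ab(4) v(2) u(2) by (simp add: power_add divide_inverse inverse_mult_distrib mult_ac)
  then show ?thesis using w X_iff by blast
qed

lemma Vcauchy:
  fixes tau :: "nat \<Rightarrow> 'a"
  assumes tau: "\<And>k. tau k \<in> V"
    and C: "\<And>e. e > 0 \<Longrightarrow> \<exists>N. \<forall>n n'. N \<le> n \<longrightarrow> N \<le> n' \<longrightarrow> ab (tau n - tau n') < e"
  shows "\<exists>v\<in>V. \<forall>e>0. \<exists>K. \<forall>n\<ge>K. ab (tau n - v) < e"
proof -
  have "\<forall>k::nat. \<exists>N. \<forall>n n'. N \<le> n \<longrightarrow> N \<le> n' \<longrightarrow> ab (tau n - tau n') < al powi (- int k)"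
    using C[OF al_pos] by blast
  from choice[OF this] obtain N where N0: "\<forall>k. \<forall>n n'. N k \<le> n \<longrightarrow> N k \<le> n' \<longrightarrow> ab (tau n - tau n') < al powi (- int k)"
    by blast
  then have N: "\<And>k n n'. N k \<le> n \<Longrightarrow> N k \<le> n' \<Longrightarrow> ab (tau n - tau n') < al powi (- int k)"
    by blast
  define M where "M k = (\<Sum>i\<le>k. N i)" for k
  have MN: "N k \<le> M k" for k unfolding M_def by (rule member_le_sum) auto
  have Mm: "M k \<le> M (Suc k)" for k unfolding M_def by simp
  define f where "f k = tau (M k)" for k
  have fV: "f k \<in> V" for k unfolding f_def using tau by simp
  have "ab (f (Suc k) - f k) < al powi (- int k)" for k
  proof -
    have "N k \<le> M (Suc k)" using MN[of k] Mm[of k] by linarith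
    then show ?thesis unfolding f_def using N[of k "M (Suc k)" "M k"] MN[of k] by blast
  qed
  then obtain v where v: "v \<in> V" "\<And>k. ab (v - f k) < al powi (- int k)" using Vlim fV by blast
  have "\<exists>K. \<forall>n\<ge>K. ab (tau n - v) < e" if e: "e > 0" for e
  proof -
    obtain k where k: "al powi (- int k) < e" using small_ex e by blast
    have "ab (tau n - v) < e" if n: "n \<ge> M k" for n
    proof -
      have "ab (tau n - tau (M k)) < al powi (- int k)" using N[of k n "M k"] MN[of k] n by linarith
      then have "ab ((tau n - tau (M k)) - (v - f k)) < al powi (- int k)" using small_diff[OF _ v(2)[of k]] by blast
      then show ?thesis using k unfolding f_def by simp
    qed
    then show ?thesis by blast
  qed
  then show ?thesis using v by blast
qed

lemma X_complete: "Metric_space.mcomplete X (tdist al R t)"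
proof -
  interpret M: Metric_space X "tdist al R t" by (rule metric)
  show ?thesis unfolding M.mcomplete_def
  proof (intro allI impI)
    fix s assume "M.MCauchy s"
    then have sX: "\<And>n. s n \<in> X" and C: "\<And>e. e > 0 \<Longrightarrow> \<exists>N. \<forall>n n'. N \<le> n \<longrightarrow> N \<le> n' \<longrightarrow> ab (s n - s n') < e"
      unfolding M.MCauchy_def tdist_def ab_def by auto
    obtain N where N: "\<And>n n'. N \<le> n \<Longrightarrow> N \<le> n' \<Longrightarrow> ab (s n - s n') < 1" using C[of 1] by auto
    define tau where "tau k = s (N + k) - s N" for k
    have tauV: "tau k \<in> V" for k
      unfolding tau_def using X_le1 X_diff sX N[of "N + k" N] by simp
    have Ct: "\<exists>N'. \<forall>n n'. N' \<le> n \<longrightarrow> N' \<le> n' \<longrightarrow> ab (tau n - tau n') < e" if e: "e > 0" for e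
    proof -
      obtain N' where N': "\<And>n n'. N' \<le> n \<Longrightarrow> N' \<le> n' \<Longrightarrow> ab (s n - s n') < e" using C[OF e] by auto
      show ?thesis unfolding tau_def by (intro exI[of _ N'] allI impI) (simp add: N')
    qed
    obtain v where v: "v \<in> V" "\<And>e. e > 0 \<Longrightarrow> \<exists>K. \<forall>n\<ge>K. ab (tau n - v) < e"
      using Vcauchy[of tau, OF tauV Ct] by blast
    have lX: "v + s N \<in> X" using X_add VX v sX by blast
    have "\<exists>K. \<forall>n\<ge>K. s n \<in> X \<and> tdist al R t (s n) (v + s N) < e" if e: "e > 0" for e
    proof -
      obtain K where K: "\<And>n. n \<ge> K \<Longrightarrow> ab (tau n - v) < e" using v(2)[OF e] by blast
      have "s n \<in> X \<and> tdist al R t (s n) (v + s N) < e" if n: "n \<ge> N + K" for n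
      proof -
        have "tau (n - N) = s n - s N" unfolding tau_def using n by simp
        then have e1: "s n - (v + s N) = tau (n - N) - v" by (simp add: algebra_simps)
        have e2: "ab (tau (n - N) - v) < e" using K[of "n - N"] n by simp
        have "tdist al R t (s n) (v + s N) < e" unfolding tdist_def e1 using e2 unfolding ab_def .
        then show ?thesis using sX by simp
      qed
      then show ?thesis by blast
    qed
    then show "\<exists>x. limitin M.mtopology s x sequentially"
      using lX unfolding M.limit_metric_sequentially by blast
  qed
qed


lemma banach: "banach_space_over (frac_field T) (tabs al R t) X"
proof -
  have e: "(\<lambda>x y. tabs al R t (x - y)) = tdist al R t" by (simp add: tdist_def fun_eq_iff)
  show ?thesis unfolding banach_space_over_def e
  proof (intro conjI ballI)
    show "0 \<in> X" by (rule X0)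
    show "x + y \<in> X" if "x \<in> X" "y \<in> X" for x y using X_add that by blast
    show "k * x \<in> X" if "k \<in> frac_field T" "x \<in> X" for k x using X_scal that by blast
    show "0 \<le> tabs al R t x" for x using ab_nonneg[of x] unfolding ab_def .
    show "(tabs al R t x = 0) = (x = 0)" for x using ab_zero[of x] unfolding ab_def .
    show "tabs al R t (x + y) \<le> tabs al R t x + tabs al R t y" for x y using ab_tri[of x y] unfolding ab_def .
    show "tabs al R t (k * x) = tabs al R t k * tabs al R t x" for k x using ab_mult[of k x] unfolding ab_def .
    show "Metric_space.mcomplete X (tdist al R t)" by (rule X_complete)
  qed
qed

lemma main: "closedin (Metric_space.mtopology R (tdist al R t)) V
    \<and> (\<forall>v \<in> invert_t t V - {0}.
         tabs al R t v = Inf ((\<lambda>n. al powi n) ` {n::int. t powi n * v \<in> V}))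
    \<and> V = {v \<in> invert_t t V. tabs al R t v \<le> 1}
    \<and> openin (Metric_space.mtopology (invert_t t V) (tdist al R t)) V
    \<and> closedin (Metric_space.mtopology (invert_t t V) (tdist al R t)) V
    \<and> closedin (Metric_space.mtopology UNIV (tdist al R t)) (invert_t t V)
    \<and> banach_space_over (frac_field T) (tabs al R t) (invert_t t V)"
proof (intro conjI ballI)
  show "closedin (Metric_space.mtopology R (tdist al R t)) V" by (rule V_closed_R)
  show "tabs al R t v = Inf ((\<lambda>n. al powi n) ` {n::int. t powi n * v \<in> V})" if "v \<in> invert_t t V - {0}" for v
    using norm_inf[of v] that unfolding ab_def X_def by blast
  show "V = {v \<in> invert_t t V. tabs al R t v \<le> 1}" using V_eq unfolding ab_def X_def .
  show "openin (Metric_space.mtopology (invert_t t V) (tdist al R t)) V" using V_open_X unfolding X_def .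
  show "closedin (Metric_space.mtopology (invert_t t V) (tdist al R t)) V" using V_closed_X unfolding X_def .
  show "closedin (Metric_space.mtopology UNIV (tdist al R t)) (invert_t t V)" using X_closed unfolding X_def .
  show "banach_space_over (frac_field T) (tabs al R t) (invert_t t V)" using banach unfolding X_def .
qed

end

theorem lemma3p1:
  fixes T R0 F1 F2 V W :: "'a::field set" and t :: 'a and \<alpha> :: real
  assumes T_cdvr: "complete_dvr T t"
    and R0_cdvr: "complete_dvr R0 t"
    and T_sub: "T \<subseteq> R0"
    and F0_frac: "frac_field R0 = UNIV"
    and alpha: "\<alpha> > 1"
    and F1: "subfield_of F1" "T \<subseteq> F1"
    and F2: "subfield_of F2" "T \<subseteq> F2"
    and V_sub: "V \<subseteq> F1 \<inter> R0" and W_sub: "W \<subseteq> F2 \<inter> R0"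
    and V_mod: "submodule_over T V" and W_mod: "submodule_over T W"
    and V_compl: "t_adically_complete t V" and W_compl: "t_adically_complete t W"
    and I: "{v + w | v w. v \<in> V \<and> w \<in> W} = R0"
    and IIV: "V \<inter> smul_set t R0 = smul_set t V"
    and IIW: "W \<inter> smul_set t R0 = smul_set t W"
  shows "closedin (Metric_space.mtopology R0 (tdist \<alpha> R0 t)) V
    \<and> (\<forall>v \<in> invert_t t V - {0}.
         tabs \<alpha> R0 t v = Inf ((\<lambda>n. \<alpha> powi n) ` {n::int. t powi n * v \<in> V}))
    \<and> V = {v \<in> invert_t t V. tabs \<alpha> R0 t v \<le> 1}
    \<and> openin (Metric_space.mtopology (invert_t t V) (tdist \<alpha> R0 t)) V
    \<and> closedin (Metric_space.mtopology (invert_t t V) (tdist \<alpha> R0 t)) V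
    \<and> closedin (Metric_space.mtopology UNIV (tdist \<alpha> R0 t)) (invert_t t V)
    \<and> banach_space_over (frac_field T) (tabs \<alpha> R0 t) (invert_t t V)"
proof -
  interpret vm R0 t \<alpha> T V
    using R0_cdvr T_cdvr F0_frac alpha V_mod V_sub V_compl IIV
    unfolding complete_dvr_def by unfold_locales auto
  show ?thesis by (rule main)
qed

end
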